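(* Let $k$ be a field, let $n,m,n_1,\dots,n_r$ be positive integers with $n_1+\dots+n_r=n$, and let $G\subseteq\mathfrak{S}_r$ be a permutation group. There exists an $n\times n$ quantum parameter matrix $\mathfrak{q}$ with blocks $B_1,\dots,B_r$ of sizes $|B_i|=n_i$ and $\mathrm{Stab}(\mathfrak{q})=G$ (identifying $B_i$ with $i$), giving $\mathrm{Aut}_{\mathrm{gr}}(S_{\mathfrak{q}}(k^n))\cong\prod_i\mathrm{GL}(n_i,k)\rtimes G$, if and only if there exists an $mn\times mn$ quantum parameter matrix $\mathfrak{q}'$ with blocks $B'_1,\dots,B'_r$ of sizes $|B'_i|=m\,n_i$ and $\mathrm{Stab}(\mathfrak{q}')=G$ (identifying $B'_i$ with $i$), giving $\mathrm{Aut}_{\mathrm{gr}}(S_{\mathfrak{q}'}(k^{mn}))\cong\prod_i\mathrm{GL}(m\cdot n_i,k)\rtimes G$.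
   Context: A quantum parameter matrix is a square matrix $\mathfrak{p}=(p_{ij})$ over $k$ with $p_{ii}=1$ and $p_{ij}p_{ji}=1$. For such $\mathfrak{p}$ of size $N$, $S_{\mathfrak{p}}(k^N)$ is the $k$-algebra generated by the standard basis $v_1,\dots,v_N$ with relations $v_jv_i=p_{ij}v_iv_j$, graded by $\deg v_i=1$; $\mathrm{Aut}_{\mathrm{gr}}$ is its group of degree-preserving algebra automorphisms, viewed as a subgroup of $\mathrm{GL}(N,k)$. The blocks of $\mathfrak{p}$ are the classes of the partition of $[N]$ with $i\sim j$ iff rows $i,j$ of $\mathfrak{p}$ are identical; $\mathfrak{p}_{BC}=(p_{ij})_{i\in B,j\in C}$; with $r$ the number of blocks, $\mathfrak{S}_r$ permutes the blocks and $\mathrm{Stab}(\mathfrak{p})=\{\sigma\in\mathfrak{S}_r:|\sigma(B)|=|B|\text{ and }\mathfrak{p}_{BC}=\mathfrak{p}_{\sigma(B)\sigma(C)}\text{ for all blocks }B,C\}$. For any quantum parameter matrix $\mathfrak{p}$ one has $\mathrm{Aut}_{\mathrm{gr}}(S_{\mathfrak{p}}(k^N))\cong(\prod_{B}\mathrm{GL}(V_B))\rtimes\mathrm{Stab}(\mathfrak{p})$ with $\mathrm{GL}(V_B)\cong\mathrm{GL}(|B|,k)$ and $\mathrm{Stab}(\mathfrak{p})$ permuting the factors. *)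

theory Defs
  imports Main "HOL-Combinatorics.Permutations"
begin

text \<open>An N x N matrix over k is a function q :: nat => nat => k, with indices in {0..<N}.\<close>

definition quantum_param :: "nat \<Rightarrow> (nat \<Rightarrow> nat \<Rightarrow> 'k::field) \<Rightarrow> bool" where
  "quantum_param N q \<longleftrightarrow>
     (\<forall>i<N. q i i = 1) \<and> (\<forall>i<N. \<forall>j<N. q i j * q j i = 1)"

definition block_of :: "nat \<Rightarrow> (nat \<Rightarrow> nat \<Rightarrow> 'k) \<Rightarrow> nat \<Rightarrow> nat set" where
  "block_of N q i = {j. j < N \<and> (\<forall>l<N. q j l = q i l)}"

definition blocks :: "nat \<Rightarrow> (nat \<Rightarrow> nat \<Rightarrow> 'k) \<Rightarrow> nat set set" where
  "blocks N q = {block_of N q i | i. i < N}"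

text \<open>B enumerates the blocks as B 0, ..., B (r-1) (the paper's B_1..B_r), bijectively.\<close>
definition blocks_indexed ::
  "nat \<Rightarrow> (nat \<Rightarrow> nat \<Rightarrow> 'k) \<Rightarrow> nat \<Rightarrow> (nat \<Rightarrow> nat set) \<Rightarrow> bool" where
  "blocks_indexed N q r B \<longleftrightarrow> bij_betw B {..<r} (blocks N q)"

definition submatrix :: "(nat \<Rightarrow> nat \<Rightarrow> 'k) \<Rightarrow> nat set \<Rightarrow> nat set \<Rightarrow> 'k list list" where
  "submatrix q B C =
     map (\<lambda>i. map (\<lambda>j. q i j) (sorted_list_of_set C)) (sorted_list_of_set B)"

definition Stab ::
  "(nat \<Rightarrow> nat \<Rightarrow> 'k) \<Rightarrow> nat \<Rightarrow> (nat \<Rightarrow> nat set) \<Rightarrow> (nat \<Rightarrow> nat) set" where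
  "Stab q r B = {\<sigma>. \<sigma> permutes {..<r} \<and>
      (\<forall>i<r. card (B (\<sigma> i)) = card (B i)) \<and>
      (\<forall>i<r. \<forall>j<r. submatrix q (B i) (B j) = submatrix q (B (\<sigma> i)) (B (\<sigma> j)))}"

definition perm_group :: "nat \<Rightarrow> (nat \<Rightarrow> nat) set \<Rightarrow> bool" where
  "perm_group r G \<longleftrightarrow> (\<forall>\<sigma>\<in>G. \<sigma> permutes {..<r}) \<and> id \<in> G \<and>
     (\<forall>\<sigma>\<in>G. \<forall>\<tau>\<in>G. \<sigma> \<circ> \<tau> \<in> G) \<and> (\<forall>\<sigma>\<in>G. inv \<sigma> \<in> G)"

end

theory Submission
  imports Defs
begin

definition rqp :: "nat \<Rightarrow> (nat \<Rightarrow> nat \<Rightarrow> 'k::field) \<Rightarrow> bool" where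
  "rqp r c \<longleftrightarrow> (\<forall>i<r. c i i = 1) \<and> (\<forall>i<r. \<forall>j<r. c i j * c j i = 1) \<and>
     (\<forall>i<r. \<forall>j<r. i \<noteq> j \<longrightarrow> (\<exists>l<r. c i l \<noteq> c j l))"

definition Sset :: "nat \<Rightarrow> (nat \<Rightarrow> nat) \<Rightarrow> (nat \<Rightarrow> nat \<Rightarrow> 'k) \<Rightarrow> (nat \<Rightarrow> nat) set" where
  "Sset r s c = {\<sigma>. \<sigma> permutes {..<r} \<and> (\<forall>i<r. s (\<sigma> i) = s i) \<and>
      (\<forall>i<r. \<forall>j<r. c (\<sigma> i) (\<sigma> j) = c i j)}"

lemma map_const_eq: "\<forall>x\<in>set xs. f x = v \<Longrightarrow> map f xs = replicate (length xs) v"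
  by (induction xs) auto

lemma submatrix_const:
  assumes "finite B" "finite C" "\<forall>x\<in>B. \<forall>y\<in>C. q x y = v"
  shows "submatrix q B C = replicate (card B) (replicate (card C) v)"
proof -
  have "\<forall>i\<in>set (sorted_list_of_set B). map (\<lambda>j. q i j) (sorted_list_of_set C) = replicate (card C) v"
    using assms by (intro ballI, subst map_const_eq) auto
  then show ?thesis unfolding submatrix_def using assms
    by (subst map_const_eq) auto
qed

lemma Stab_char:
  assumes "\<forall>i<r. 0 < card (B i)"
    and "\<forall>i<r. \<forall>j<r. \<forall>x\<in>B i. \<forall>y\<in>B j. q x y = c i j"
  shows "Stab q r B = {\<sigma>. \<sigma> permutes {..<r} \<and> (\<forall>i<r. card (B (\<sigma> i)) = card (B i)) \<and>
      (\<forall>i<r. \<forall>j<r. c (\<sigma> i) (\<sigma> j) = c i j)}"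
proof -
  have fin: "\<forall>i<r. finite (B i)" using assms(1) card_gt_0_iff by blast
  have sm: "submatrix q (B i) (B j) = replicate (card (B i)) (replicate (card (B j)) (c i j))"
    if "i < r" "j < r" for i j
    using submatrix_const[of "B i" "B j" q "c i j"] fin assms(2) that by auto
  have pi: "\<sigma> i < r" if "\<sigma> permutes {..<r}" "i < r" for \<sigma> i
    using permutes_in_image[OF that(1)] that(2) by auto
  show ?thesis
    unfolding Stab_def
  proof (intro Collect_cong iffI conjI, goal_cases)
    case (1 \<sigma>) then show ?case by blast
  next
    case (2 \<sigma>) then show ?case by blast
  next
    case (3 \<sigma>)
    show ?case
    proof (intro allI impI)
      fix i j assume ij: "i < r" "j < r"
      have "submatrix q (B i) (B j) = submatrix q (B (\<sigma> i)) (B (\<sigma> j))" using 3 ij by blast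
      then show "c (\<sigma> i) (\<sigma> j) = c i j"
        using sm ij sm[OF pi pi] 3 assms(1) by (auto simp: replicate_eq_replicate)
    qed
  next
    case (4 \<sigma>) then show ?case by blast
  next
    case (5 \<sigma>) then show ?case by blast
  next
    case (6 \<sigma>)
    show ?case
    proof (intro allI impI)
      fix i j assume ij: "i < r" "j < r"
      show "submatrix q (B i) (B j) = submatrix q (B (\<sigma> i)) (B (\<sigma> j))"
        using sm ij sm[OF pi pi] 6 assms(1) by (auto simp: replicate_eq_replicate)
    qed
  qed
qed

lemma get_reduced:
  fixes q :: "nat \<Rightarrow> nat \<Rightarrow> 'k::field"
  assumes qp: "quantum_param N q" and bi: "blocks_indexed N q r B"
  shows "\<exists>c. rqp r c \<and> (\<forall>i<r. \<forall>j<r. \<forall>x\<in>B i. \<forall>y\<in>B j. q x y = c i j)"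
proof -
  have bij: "bij_betw B {..<r} (blocks N q)" using bi blocks_indexed_def by blast
  have "\<forall>i<r. \<exists>x. x < N \<and> B i = block_of N q x"
    using bij_betwE[OF bij] unfolding blocks_def by auto
  then obtain rep where rep: "\<forall>i<r. rep i < N \<and> B i = block_of N q (rep i)" by metis
  define c where "c i j = q (rep i) (rep j)" for i j
  have inv: "a = b" if "a * x = 1" "b * x = 1" for a b x :: 'k
  proof -
    have "a = a * (b * x)" using that by simp
    also have "\<dots> = b * (a * x)" by (simp add: algebra_simps)
    finally show ?thesis using that by simp
  qed
  have key: "q x y = c i j" if "i < r" "j < r" "x \<in> B i" "y \<in> B j" for i j x y
  proof -
    have y: "y < N" and x: "x < N" using that rep unfolding block_of_def by auto
    have "q x y = q (rep i) y" using that rep y unfolding block_of_def by auto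
    moreover have "q y (rep i) = q (rep j) (rep i)" using that rep unfolding block_of_def by auto
    moreover have "q (rep i) y * q y (rep i) = 1" using qp rep that y unfolding quantum_param_def by auto
    moreover have "q (rep i) (rep j) * q (rep j) (rep i) = 1" using qp rep that unfolding quantum_param_def by auto
    ultimately show ?thesis unfolding c_def using inv by metis
  qed
  have "rqp r c"
    unfolding rqp_def
  proof (intro conjI allI impI)
    fix i assume "i < r" then show "c i i = 1" using qp rep unfolding c_def quantum_param_def by auto
  next
    fix i j assume "i < r" "j < r" then show "c i j * c j i = 1"
      using qp rep unfolding c_def quantum_param_def by auto
  next
    fix i j assume ij: "i < r" "j < r" "i \<noteq> j"
    show "\<exists>l<r. c i l \<noteq> c j l"
    proof (rule ccontr)
      assume "\<not> ?thesis"
      then have eq: "\<forall>l<r. c i l = c j l" by auto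
      have rows: "q (rep i) y = q (rep j) y" if "y < N" for y
      proof -
        have "block_of N q y \<in> blocks N q" using that unfolding blocks_def by auto
        then obtain l where l: "l < r" "B l = block_of N q y" using bij_betwE bij
          by (metis bij_betw_imp_surj_on image_iff lessThan_iff)
        have yl: "y \<in> B l" using l that unfolding block_of_def by auto
        have ri: "rep i \<in> B i" "rep j \<in> B j" using rep ij unfolding block_of_def by auto
        show ?thesis using key[OF ij(1) l(1) ri(1) yl] key[OF ij(2) l(1) ri(2) yl] eq l by simp
      qed
      have "B i = B j" using rep ij rows unfolding block_of_def by auto
      moreover have "inj_on B {..<r}" using bij bij_betw_def by blast
      ultimately show False using ij inj_on_def by (metis lessThan_iff)
    qed
  qed
  then show ?thesis using key by blast
qed

definition st :: "(nat \<Rightarrow> nat) \<Rightarrow> nat \<Rightarrow> nat" where "st s k = (\<Sum>i<k. s i)"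
definition blk :: "(nat \<Rightarrow> nat) \<Rightarrow> nat \<Rightarrow> nat" where "blk s x = (LEAST i. x < st s (Suc i))"

lemma st_Suc: "st s (Suc i) = st s i + s i" unfolding st_def by simp
lemma st_mono: "i \<le> j \<Longrightarrow> st s i \<le> st s j"
  unfolding st_def by (rule sum_mono2) auto

lemma blk_eq: "st s i \<le> x \<Longrightarrow> x < st s (Suc i) \<Longrightarrow> blk s x = i"
  unfolding blk_def
proof (rule Least_equality)
  fix j assume "st s i \<le> x" "x < st s (Suc j)"
  then show "i \<le> j" using st_mono[of "Suc j" i s] by (meson dual_order.trans not_less_eq_eq not_le)
qed

lemma blk_in:
  assumes "x < st s r"
  shows "blk s x < r \<and> st s (blk s x) \<le> x \<and> x < st s (Suc (blk s x))"
proof -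
  have r: "r \<noteq> 0" using assms unfolding st_def by (cases r) auto
  have w: "x < st s (Suc (r - 1))" using r assms by simp
  have a: "x < st s (Suc (blk s x))" unfolding blk_def by (rule LeastI[of "\<lambda>i. x < st s (Suc i)", OF w])
  have b: "blk s x \<le> r - 1" unfolding blk_def by (rule Least_le[of "\<lambda>i. x < st s (Suc i)", OF w])
  have c: "st s (blk s x) \<le> x"
  proof (cases "blk s x")
    case 0 then show ?thesis unfolding st_def by simp
  next
    case (Suc k)
    have "\<not> x < st s (Suc k)" using not_less_Least[of k "\<lambda>i. x < st s (Suc i)"] Suc unfolding blk_def by auto
    then show ?thesis using Suc by simp
  qed
  show ?thesis using a b c r by auto
qed

lemma build:
  fixes c :: "nat \<Rightarrow> nat \<Rightarrow> 'k::field"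
  assumes rc: "rqp r c" and pos: "\<forall>i<r. 0 < s i" and N: "st s r = N"
  shows "\<exists>q B. quantum_param N q \<and> blocks_indexed N q r B \<and> (\<forall>i<r. card (B i) = s i)
     \<and> (\<forall>i<r. \<forall>j<r. \<forall>x\<in>B i. \<forall>y\<in>B j. q x y = c i j)"
proof -
  define B where "B i = {st s i..<st s (Suc i)}" for i
  define q where "q x y = c (blk s x) (blk s y)" for x y
  have cardB: "card (B i) = s i" for i unfolding B_def st_Suc by simp
  have blkB: "blk s x = i" if "x \<in> B i" for x i using that blk_eq unfolding B_def by auto
  have inB: "x \<in> B (blk s x) \<and> blk s x < r" if "x < N" for x
    using blk_in[of x s r] that N unfolding B_def by auto
  have BN: "B i \<subseteq> {..<N}" if "i < r" for i
    using st_mono[of "Suc i" r s] that N unfolding B_def by auto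
  have stB: "st s i \<in> B i" if "i < r" for i using pos that unfolding B_def st_Suc by auto
  have d: "\<forall>i<r. \<forall>j<r. i \<noteq> j \<longrightarrow> (\<exists>l<r. c i l \<noteq> c j l)"
    using rc unfolding rqp_def by blast
  have qp: "quantum_param N q"
    unfolding quantum_param_def
  proof (intro conjI allI impI)
    fix i assume "i < N" then have "blk s i < r" using inB by blast
    then show "q i i = 1" using rc unfolding q_def rqp_def by simp
  next
    fix i j assume "i < N" "j < N" then have "blk s i < r" "blk s j < r" using inB by blast+
    then show "q i j * q j i = 1"
      using rc unfolding q_def rqp_def by simp
  qed
  have bo: "block_of N q x = B (blk s x)" if x: "x < N" for x
  proof
    show "block_of N q x \<subseteq> B (blk s x)"
    proof
      fix y assume "y \<in> block_of N q x"
      then have y: "y < N" and rw: "\<forall>l<N. q y l = q x l" unfolding block_of_def by auto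
      have eqs: "\<forall>j<r. c (blk s y) j = c (blk s x) j"
      proof (intro allI impI)
        fix j assume j: "j < r"
        have lt: "st s j < N" using BN[OF j] stB[OF j] by auto
        have "q y (st s j) = q x (st s j)" using rw lt by blast
        then show "c (blk s y) j = c (blk s x) j" using blkB[OF stB[OF j]] unfolding q_def by simp
      qed
      have "blk s y = blk s x"
      proof (rule ccontr)
        assume ne: "blk s y \<noteq> blk s x"
        obtain l where "l < r" "c (blk s y) l \<noteq> c (blk s x) l"
          using d inB[OF x] inB[OF y] ne by blast
        then show False using eqs by blast
      qed
      then show "y \<in> B (blk s x)" using inB[OF y] by simp
    qed
  next
    show "B (blk s x) \<subseteq> block_of N q x"
    proof
      fix y assume y: "y \<in> B (blk s x)"
      have "y < N" using BN inB[OF x] y by blast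
      moreover have "blk s y = blk s x" using blkB[OF y] .
      ultimately show "y \<in> block_of N q x" unfolding block_of_def q_def by simp
    qed
  qed
  have inj: "inj_on B {..<r}"
  proof (rule inj_onI)
    fix i j assume "i \<in> {..<r}" "j \<in> {..<r}" "B i = B j"
    then have "st s i \<in> B j" using stB by auto
    then have "blk s (st s i) = j" by (rule blkB)
    moreover have "blk s (st s i) = i" using stB \<open>i \<in> {..<r}\<close> blkB by blast
    ultimately show "i = j" by simp
  qed
  have img: "B ` {..<r} = blocks N q"
  proof
    show "B ` {..<r} \<subseteq> blocks N q"
    proof
      fix b assume "b \<in> B ` {..<r}"
      then obtain i where i: "i < r" "b = B i" by auto
      have lt: "st s i < N" using BN[OF i(1)] stB[OF i(1)] by auto
      have "b = block_of N q (st s i)" using bo[OF lt] blkB[OF stB[OF i(1)]] i by simp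
      then show "b \<in> blocks N q" unfolding blocks_def using lt by blast
    qed
    show "blocks N q \<subseteq> B ` {..<r}"
    proof
      fix b assume "b \<in> blocks N q"
      then obtain x where x: "x < N" "b = block_of N q x" unfolding blocks_def by blast
      then show "b \<in> B ` {..<r}" using bo[OF x(1)] inB[OF x(1)] by auto
    qed
  qed
  have bi: "blocks_indexed N q r B"
    unfolding blocks_indexed_def bij_betw_def using inj img by simp
  have "\<forall>i<r. \<forall>j<r. \<forall>x\<in>B i. \<forall>y\<in>B j. q x y = c i j"
    using blkB unfolding q_def by simp
  then show ?thesis
    using qp bi cardB by blast
qed

lemma reduce:
  fixes G :: "(nat \<Rightarrow> nat) set"
  assumes pos: "\<forall>i<r. 0 < s i" and N: "(\<Sum>i<r. s i) = N"
  shows "(\<exists>(q :: nat \<Rightarrow> nat \<Rightarrow> 'k::field) B.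
            quantum_param N q \<and> blocks_indexed N q r B \<and>
            (\<forall>i<r. card (B i) = s i) \<and> Stab q r B = G)
     \<longleftrightarrow> (\<exists>c :: nat \<Rightarrow> nat \<Rightarrow> 'k. rqp r c \<and> Sset r s c = G)"
proof
  assume "\<exists>(q :: nat \<Rightarrow> nat \<Rightarrow> 'k::field) B.
            quantum_param N q \<and> blocks_indexed N q r B \<and>
            (\<forall>i<r. card (B i) = s i) \<and> Stab q r B = G"
  then obtain q :: "nat \<Rightarrow> nat \<Rightarrow> 'k" and B where h: "quantum_param N q" "blocks_indexed N q r B"
    "\<forall>i<r. card (B i) = s i" "Stab q r B = G" by blast
  obtain c where c: "rqp r c" "\<forall>i<r. \<forall>j<r. \<forall>x\<in>B i. \<forall>y\<in>B j. q x y = c i j"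
    using get_reduced[OF h(1,2)] by blast
  have "Stab q r B = Sset r s c"
  proof -
    have cp: "\<forall>i<r. 0 < card (B i)" using h(3) pos by simp
    have pim: "\<sigma> i < r" if "\<sigma> permutes {..<r}" "i < r" for \<sigma> i
      using permutes_in_image[OF that(1)] that(2) by simp
    show ?thesis
      unfolding Stab_char[OF cp c(2)] Sset_def
    proof (rule Collect_cong)
      fix \<sigma> :: "nat \<Rightarrow> nat"
      have "\<sigma> permutes {..<r} \<Longrightarrow> (\<forall>i<r. card (B (\<sigma> i)) = card (B i)) = (\<forall>i<r. s (\<sigma> i) = s i)"
        using h(3) pim by auto
      then show "(\<sigma> permutes {..<r} \<and> (\<forall>i<r. card (B (\<sigma> i)) = card (B i)) \<and> (\<forall>i<r. \<forall>j<r. c (\<sigma> i) (\<sigma> j) = c i j)) =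
        (\<sigma> permutes {..<r} \<and> (\<forall>i<r. s (\<sigma> i) = s i) \<and> (\<forall>i<r. \<forall>j<r. c (\<sigma> i) (\<sigma> j) = c i j))"
        by blast
    qed
  qed
  then show "\<exists>c :: nat \<Rightarrow> nat \<Rightarrow> 'k. rqp r c \<and> Sset r s c = G" using c h by auto
next
  assume "\<exists>c :: nat \<Rightarrow> nat \<Rightarrow> 'k. rqp r c \<and> Sset r s c = G"
  then obtain c :: "nat \<Rightarrow> nat \<Rightarrow> 'k" where c: "rqp r c" "Sset r s c = G" by blast
  obtain q :: "nat \<Rightarrow> nat \<Rightarrow> 'k" and B where h: "quantum_param N q" "blocks_indexed N q r B"
    "\<forall>i<r. card (B i) = s i" "\<forall>i<r. \<forall>j<r. \<forall>x\<in>B i. \<forall>y\<in>B j. q x y = c i j"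
    using build[OF c(1) pos] N st_def by metis
  have "Stab q r B = Sset r s c"
  proof -
    have cp: "\<forall>i<r. 0 < card (B i)" using h(3) pos by simp
    have pim: "\<sigma> i < r" if "\<sigma> permutes {..<r}" "i < r" for \<sigma> i
      using permutes_in_image[OF that(1)] that(2) by simp
    show ?thesis
      unfolding Stab_char[OF cp h(4)] Sset_def
    proof (rule Collect_cong)
      fix \<sigma> :: "nat \<Rightarrow> nat"
      have "\<sigma> permutes {..<r} \<Longrightarrow> (\<forall>i<r. card (B (\<sigma> i)) = card (B i)) = (\<forall>i<r. s (\<sigma> i) = s i)"
        using h(3) pim by auto
      then show "(\<sigma> permutes {..<r} \<and> (\<forall>i<r. card (B (\<sigma> i)) = card (B i)) \<and> (\<forall>i<r. \<forall>j<r. c (\<sigma> i) (\<sigma> j) = c i j)) =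
        (\<sigma> permutes {..<r} \<and> (\<forall>i<r. s (\<sigma> i) = s i) \<and> (\<forall>i<r. \<forall>j<r. c (\<sigma> i) (\<sigma> j) = c i j))"
        by blast
    qed
  qed
  then show "\<exists>(q :: nat \<Rightarrow> nat \<Rightarrow> 'k::field) B.
            quantum_param N q \<and> blocks_indexed N q r B \<and>
            (\<forall>i<r. card (B i) = s i) \<and> Stab q r B = G" using h c by blast
qed

theorem corollary5p5:
  fixes ns :: "nat \<Rightarrow> nat" and n m r :: nat and G :: "(nat \<Rightarrow> nat) set"
  assumes "0 < n" and "0 < m" and "0 < r"
    and "\<forall>i<r. 0 < ns i"
    and "(\<Sum>i<r. ns i) = n"
    and "perm_group r G"
  shows "(\<exists>(q :: nat \<Rightarrow> nat \<Rightarrow> 'k::field) B.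
            quantum_param n q \<and> blocks_indexed n q r B \<and>
            (\<forall>i<r. card (B i) = ns i) \<and> Stab q r B = G)
     \<longleftrightarrow> (\<exists>(q' :: nat \<Rightarrow> nat \<Rightarrow> 'k) B'.
            quantum_param (m * n) q' \<and> blocks_indexed (m * n) q' r B' \<and>
            (\<forall>i<r. card (B' i) = m * ns i) \<and> Stab q' r B' = G)"
proof -
  have p2: "\<forall>i<r. 0 < m * ns i" using assms by auto
  have s2: "(\<Sum>i<r. m * ns i) = m * n" using assms(5) by (simp add: sum_distrib_left[symmetric])
  have "Sset r (\<lambda>i. m * ns i) c = Sset r ns c" for c :: "nat \<Rightarrow> nat \<Rightarrow> 'k"
    unfolding Sset_def using assms(2) by auto
  then show ?thesis
    unfolding reduce[OF assms(4,5)] reduce[OF p2 s2, where 'k='k] by simp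
qed

end
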